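(* Let $k\ge2$, $n>2^k$ and $c=2^k-2$. Let $C=[u_1\oplus\ell_1]\cup\dots\cup[u_s\oplus\ell_s]\subseteq V$, where $0\le u_1<\dots<u_s\le n-1$ and $s$ is minimal. Then $C$ is a maximal covered set, i.e. $C=C(T)$ for some $T\in\mathcal{T}_k$ and there is no $T'\in\mathcal{T}_k$ with $C(T)\subsetneq C(T')$, if and only if (i) $u_1\neq 1$ and $u_s+\ell_s-1\neq n-2$; (ii) $u_{t+1}-(u_t+\ell_t)\ge 2$ for all $t\in\{1,\dots,s-1\}$, and $u_1-(u_s+\ell_s-n)\ge 2$; (iii) $\sum_{t=1}^s\ell_t=c+1-s$ if $\{0,n-1\}\cap C=\emptyset$, and $\sum_{t=1}^s\ell_t=c+2-s$ otherwise.
   Context: $G$ is the path graph with $V=\{0,\dots,n-1\}$ and edges $\{v,v+1\}$, $0\le v\le n-2$. A search strategy for a tree $H$ is a rooted binary tree defined recursively: a single node is a search strategy for any $H$; otherwise the root is labeled with an edge $uv$ of $H$ and its two child subtrees are search strategies for the components $H_u,H_v$ of $H-uv$ containing $u,v$. Nodes get vertex sets: the root gets $V(H)$, the children of a root labeled $uv$ get $V(H_u),V(H_v)$, recursively. $C(T)$ is the set of vertices $v$ with $V(\lambda)=\{v\}$ for a leaf $\lambda$ of $T$. The height of $T$ is the maximum number of edges on a root-to-leaf path; $\mathcal{T}_k$ is the set of search strategies for $G$ of height at most $k$. For integers $u,\ell$, $[u\oplus\ell]=\{w\bmod n: u\le w\le u+\ell-1\}$. *)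

theory Defs
  imports Main
begin

text \<open>Search strategies for a subpath of the path graph with vertices a..b.
  A node Node v L R is labeled with the edge {v, v+1}.\<close>
datatype sstrat = Leaf | Node int sstrat sstrat

fun is_strat :: "int \<Rightarrow> int \<Rightarrow> sstrat \<Rightarrow> bool" where
  "is_strat a b Leaf = True"
| "is_strat a b (Node v L R) =
     (a \<le> v \<and> v + 1 \<le> b \<and> is_strat a v L \<and> is_strat (v + 1) b R)"

fun leaf_sets :: "int \<Rightarrow> int \<Rightarrow> sstrat \<Rightarrow> int set set" where
  "leaf_sets a b Leaf = {{a..b}}"
| "leaf_sets a b (Node v L R) = leaf_sets a v L \<union> leaf_sets (v + 1) b R"

fun height :: "sstrat \<Rightarrow> nat" where
  "height Leaf = 0"
| "height (Node v L R) = Suc (max (height L) (height R))"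

definition covered :: "int \<Rightarrow> sstrat \<Rightarrow> int set" where
  "covered n T = {v. {v} \<in> leaf_sets 0 (n - 1) T}"

definition strats_k :: "nat \<Rightarrow> int \<Rightarrow> sstrat set" where
  "strats_k k n = {T. is_strat 0 (n - 1) T \<and> height T \<le> k}"

definition cyc :: "int \<Rightarrow> int \<Rightarrow> int \<Rightarrow> int set" where
  "cyc n u l = {w mod n | w. u \<le> w \<and> w \<le> u + l - 1}"

definition is_rep :: "int \<Rightarrow> int set \<Rightarrow> nat \<Rightarrow> (nat \<Rightarrow> int) \<Rightarrow> (nat \<Rightarrow> int) \<Rightarrow> bool" where
  "is_rep n C s u l \<longleftrightarrow>
     (\<forall>t\<in>{1..s}. 0 \<le> u t \<and> u t \<le> n - 1) \<and>
     (\<forall>t\<in>{1..<s}. u t < u (t + 1)) \<and>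
     C = (\<Union>t\<in>{1..s}. cyc n (u t) (l t))"

definition min_rep :: "int \<Rightarrow> int set \<Rightarrow> nat \<Rightarrow> (nat \<Rightarrow> int) \<Rightarrow> (nat \<Rightarrow> int) \<Rightarrow> bool" where
  "min_rep n C s u l \<longleftrightarrow> is_rep n C s u l \<and>
     (\<forall>s' u' l'. is_rep n C s' u' l' \<longrightarrow> s \<le> s')"

definition maximal_covered :: "nat \<Rightarrow> int \<Rightarrow> int set \<Rightarrow> bool" where
  "maximal_covered k n C \<longleftrightarrow>
     (\<exists>T\<in>strats_k k n. C = covered n T \<and>
        \<not> (\<exists>T'\<in>strats_k k n. covered n T \<subset> covered n T'))"

end

theory Submission
  imports Defs
begin


definition Sc :: "int \<Rightarrow> int \<Rightarrow> int set \<Rightarrow> int set" where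
  "Sc a b K = {x. a \<le> x \<and> x \<le> b \<and> (x = a \<or> x - 1 \<in> K) \<and> (x = b \<or> x \<in> K)}"

definition lc :: "int \<Rightarrow> int \<Rightarrow> sstrat \<Rightarrow> int set" where
  "lc a b T = {v. {v} \<in> leaf_sets a b T}"

lemma lc_Leaf: "lc a b Leaf = Sc a b {}"
proof -
  have "({v} = {a..b}) \<longleftrightarrow> (a = v \<and> b = v)" for v :: int
    by (metis atLeastAtMost_singleton atLeastatMost_empty_iff2 insert_not_empty
        singleton_insert_inj_eq antisym_conv atLeastAtMost_iff order_refl)
  then show ?thesis unfolding lc_def Sc_def by auto
qed

lemma lc_Node: "lc a b (Node v L R) = lc a v L \<union> lc (v+1) b R"
  unfolding lc_def by auto

lemma Sc_split:
  assumes "a \<le> v" "v < b" "KL \<subseteq> {a..<v}" "KR \<subseteq> {v+1..<b}"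
  shows "Sc a b (KL \<union> {v} \<union> KR) = Sc a v KL \<union> Sc (v+1) b KR"
proof -
  have "\<forall>x\<in>KL. x < v" "\<forall>x\<in>KR. v < x \<and> x < b" using assms by auto
  then show ?thesis using assms(1,2) unfolding Sc_def by (auto; fastforce)
qed

lemma strat_to_K:
  "is_strat a b T \<Longrightarrow> \<exists>K. K \<subseteq> {a..<b} \<and> card K < 2 ^ height T \<and> lc a b T = Sc a b K"
proof (induction T arbitrary: a b)
  case Leaf
  then show ?case by (intro exI[of _ "{}"]) (auto simp: lc_Leaf)
next
  case (Node v L R)
  then obtain KL KR where L: "KL \<subseteq> {a..<v}" "card KL < 2 ^ height L" "lc a v L = Sc a v KL"
    and R: "KR \<subseteq> {v+1..<b}" "card KR < 2 ^ height R" "lc (v+1) b R = Sc (v+1) b KR"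
    by auto (metis)
  have ab: "a \<le> v" "v < b" using Node.prems by auto
  have "card (KL \<union> {v} \<union> KR) \<le> card KL + card {v} + card KR"
    by (metis card_Un_le add_le_mono order_trans le_refl)
  also have "\<dots> < 2 ^ height L + 2 ^ height R" using L R by simp
  also have "\<dots> \<le> 2 ^ height (Node v L R)"
  proof -
    have "(2::nat) ^ height L \<le> 2 ^ max (height L) (height R)" by simp
    moreover have "(2::nat) ^ height R \<le> 2 ^ max (height L) (height R)" by simp
    moreover have "2 ^ height (Node v L R) = 2 * (2::nat) ^ max (height L) (height R)" by simp
    ultimately show ?thesis by linarith
  qed
  finally have c: "card (KL \<union> {v} \<union> KR) < 2 ^ height (Node v L R)" .
  have "lc a b (Node v L R) = Sc a v KL \<union> Sc (v+1) b KR" by (simp add: lc_Node L(3) R(3))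
  also have "\<dots> = Sc a b (KL \<union> {v} \<union> KR)" by (rule Sc_split[symmetric]) (use ab L R in auto)
  finally show ?case
    apply -
    apply (rule exI[of _ "KL \<union> {v} \<union> KR"])
    using L R ab c by auto
qed

lemma rank_exists:
  fixes K :: "'a::linorder set"
  shows "finite K \<Longrightarrow> j < card K \<Longrightarrow> \<exists>v\<in>K. card {x\<in>K. x < v} = j"
proof (induction K arbitrary: j rule: finite_linorder_max_induct)
  case empty
  then show ?case by simp
next
  case (insert m A)
  show ?case
  proof (cases "j < card A")
    case True
    then obtain v where v: "v \<in> A" "card {x\<in>A. x < v} = j" using insert by blast
    have eq: "{x\<in>insert m A. x < v} = {x\<in>A. x < v}" using v insert by auto
    have "card {x\<in>insert m A. x < v} = j" using eq v(2) by (simp only:)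
    then show ?thesis using v(1) by blast
  next
    case False
    have "m \<notin> A" using insert by auto
    then have "card (insert m A) = Suc (card A)" using insert by simp
    then have "j = card A" using insert False by linarith
    moreover have "{x\<in>insert m A. x < m} = A" using insert by auto
    ultimately show ?thesis by (intro bexI[of _ m]) auto
  qed
qed

lemma K_to_strat:
  "K \<subseteq> {a..<b} \<Longrightarrow> card K < 2 ^ h \<Longrightarrow> \<exists>T. is_strat a b T \<and> height T \<le> h \<and> lc a b T = Sc a b K"
proof (induction h arbitrary: a b K)
  case 0
  have "finite K" using 0 finite_subset by blast
  then have "K = {}" using 0 by simp
  then show ?case by (intro exI[of _ Leaf]) (auto simp: lc_Leaf)
next
  case (Suc h)
  show ?case
  proof (cases "K = {}")
    case True
    then show ?thesis by (intro exI[of _ Leaf]) (auto simp: lc_Leaf)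
  next
    case False
    have fin: "finite K" using Suc.prems finite_subset by blast
    then have cp: "card K > 0" using False by auto
    define j where "j = min (card K - 1) (2 ^ h - 1)"
    have "j < card K" using cp unfolding j_def by auto
    then obtain v where v: "v \<in> K" "card {x\<in>K. x < v} = j" using rank_exists fin by blast
    define KL where "KL = {x\<in>K. x < v}"
    define KR where "KR = {x\<in>K. v < x}"
    have KU: "K = KL \<union> {v} \<union> KR" unfolding KL_def KR_def using v by auto
    have "card K = card KL + card {v} + card KR"
    proof -
      have "card (KL \<union> {v} \<union> KR) = card (KL \<union> {v}) + card KR"
        by (rule card_Un_disjoint) (use fin in \<open>auto simp: KL_def KR_def\<close>)
      also have "card (KL \<union> {v}) = card KL + card {v}"
        by (rule card_Un_disjoint) (use fin in \<open>auto simp: KL_def\<close>)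
      finally show ?thesis using KU by simp
    qed
    then have cK: "card K = j + 1 + card KR" using v KL_def by simp
    have pos: "(2::nat) ^ h \<ge> 1" by simp
    have "j \<le> 2 ^ h - 1" unfolding j_def by simp
    then have cL: "card KL < 2 ^ h" using v pos unfolding KL_def by linarith
    have cR: "card KR < 2 ^ h" using cK Suc.prems(2) pos unfolding j_def by auto
    have ab: "a \<le> v" "v < b" using v Suc.prems by auto
    have sL: "KL \<subseteq> {a..<v}" using Suc.prems(1) unfolding KL_def by auto
    have sR: "KR \<subseteq> {v+1..<b}" using Suc.prems(1) unfolding KR_def by auto
    obtain TL where TL: "is_strat a v TL" "height TL \<le> h" "lc a v TL = Sc a v KL"
      using Suc.IH[OF sL cL] by blast
    obtain TR where TR: "is_strat (v+1) b TR" "height TR \<le> h" "lc (v+1) b TR = Sc (v+1) b KR"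
      using Suc.IH[OF sR cR] by blast
    have "lc a b (Node v TL TR) = Sc a v KL \<union> Sc (v+1) b KR" by (simp add: lc_Node TL(3) TR(3))
    also have "\<dots> = Sc a b (KL \<union> {v} \<union> KR)" by (rule Sc_split[symmetric]) (use ab sL sR in auto)
    finally show ?thesis
      apply -
      apply (rule exI[of _ "Node v TL TR"])
      using TL TR ab KU by auto
  qed
qed

lemma covered_char:
  "(\<exists>T\<in>strats_k k n. covered n T = D) \<longleftrightarrow> (\<exists>K. K \<subseteq> {0..<n-1} \<and> card K < 2 ^ k \<and> D = Sc 0 (n-1) K)"
proof
  assume "\<exists>T\<in>strats_k k n. covered n T = D"
  then obtain T where T: "is_strat 0 (n-1) T" "height T \<le> k" "covered n T = D"
    unfolding strats_k_def by auto
  obtain K where K: "K \<subseteq> {0..<n-1}" "card K < 2 ^ height T" "lc 0 (n-1) T = Sc 0 (n-1) K"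
    using strat_to_K[OF T(1)] by blast
  have "(2::nat) ^ height T \<le> 2 ^ k" using T(2) by simp
  then have "card K < 2 ^ k" using K(2) by linarith
  then show "\<exists>K. K \<subseteq> {0..<n-1} \<and> card K < 2 ^ k \<and> D = Sc 0 (n-1) K"
    using K T(3) unfolding covered_def lc_def by auto
next
  assume "\<exists>K. K \<subseteq> {0..<n-1} \<and> card K < 2 ^ k \<and> D = Sc 0 (n-1) K"
  then obtain K where K: "K \<subseteq> {0..<n-1}" "card K < 2 ^ k" "D = Sc 0 (n-1) K" by blast
  obtain T where "is_strat 0 (n-1) T" "height T \<le> k" "lc 0 (n-1) T = Sc 0 (n-1) K"
    using K_to_strat[OF K(1,2)] by blast
  then show "\<exists>T\<in>strats_k k n. covered n T = D"
    using K(3) unfolding strats_k_def covered_def lc_def by auto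
qed



definition K0 :: "int \<Rightarrow> int set \<Rightarrow> int set" where
  "K0 b C = {x. 0 \<le> x \<and> x \<le> b - 1 \<and> (x \<in> C \<or> x + 1 \<in> C)}"

definition good :: "int \<Rightarrow> int set \<Rightarrow> bool" where
  "good b C \<longleftrightarrow> (\<forall>x. 0 \<le> x \<and> x \<le> b \<and> x \<notin> C \<longrightarrow> \<not> ((x = 0 \<or> x - 1 \<in> C) \<and> (x = b \<or> x + 1 \<in> C)))"

lemma K0_sub: "K \<subseteq> {0..<b} \<Longrightarrow> K0 b (Sc 0 b K) \<subseteq> K"
  unfolding K0_def Sc_def by auto

lemma good_Sc: "good b (Sc 0 b K)"
  unfolding good_def Sc_def by auto

lemma Sc_K0: "C \<subseteq> {0..b} \<Longrightarrow> good b C \<Longrightarrow> Sc 0 b (K0 b C) = C"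
  unfolding good_def Sc_def K0_def by (auto; force)

lemma Sc_mono: "K \<subseteq> K' \<Longrightarrow> Sc a b K \<subseteq> Sc a b K'"
  unfolding Sc_def by auto

lemma K0_finite: "finite (K0 b C)"
proof -
  have "K0 b C \<subseteq> {0..b}" unfolding K0_def by auto
  then show ?thesis using finite_subset by blast
qed

lemma K0_strict:
  assumes "C \<subseteq> D" "good b C" "x \<in> D" "x \<notin> C" "D \<subseteq> {0..b}"
  shows "card (K0 b C) < card (K0 b D)"
proof -
  have sub: "K0 b C \<subseteq> K0 b D" using assms(1) unfolding K0_def by auto
  have x: "0 \<le> x" "x \<le> b" using assms by auto
  have "\<exists>y. y \<in> K0 b D \<and> y \<notin> K0 b C"
  proof (cases "x \<le> b - 1 \<and> x + 1 \<notin> C")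
    case True
    then show ?thesis using x assms(3,4) unfolding K0_def by (intro exI[of _ x]) auto
  next
    case False
    then have "x = b \<or> x + 1 \<in> C" using x by auto
    then have "x \<noteq> 0" "x - 1 \<notin> C" using assms(2,4) x unfolding good_def by auto
    then show ?thesis using x assms(3,4) unfolding K0_def by (intro exI[of _ "x - 1"]) auto
  qed
  then have "K0 b C \<subset> K0 b D" using sub by auto
  then show ?thesis using K0_finite psubset_card_mono by blast
qed

lemma maximal_alt:
  "maximal_covered k n C \<longleftrightarrow>
    (\<exists>T\<in>strats_k k n. covered n T = C) \<and> \<not> (\<exists>D. (\<exists>T\<in>strats_k k n. covered n T = D) \<and> C \<subset> D)"
  unfolding maximal_covered_def by auto

lemma max_char:
  assumes "int (2 ^ k) < n" "C \<subseteq> {0..n-1}"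
  shows "maximal_covered k n C \<longleftrightarrow> good (n-1) C \<and> card (K0 (n-1) C) = 2 ^ k - 1"
proof
  assume m: "maximal_covered k n C"
  then obtain K where K: "K \<subseteq> {0..<n-1}" "card K < 2 ^ k" "C = Sc 0 (n-1) K"
    unfolding maximal_alt covered_char by blast
  have g: "good (n-1) C" using K good_Sc by simp
  have fK: "finite K" using K(1) finite_subset by blast
  have "card (K0 (n-1) C) \<le> card K" using K K0_sub fK card_mono by metis
  then have le: "card (K0 (n-1) C) \<le> 2 ^ k - 1" using K(2) by linarith
  have "card (K0 (n-1) C) = 2 ^ k - 1"
  proof (rule ccontr)
    assume "card (K0 (n-1) C) \<noteq> 2 ^ k - 1"
    then have lt: "card (K0 (n-1) C) + 1 < 2 ^ k" using le by (simp add: Suc_le_eq)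
    have "K0 (n-1) C \<subseteq> {0..<n-1}" unfolding K0_def by auto
    have "card {0..<n-1} = nat (n - 1)" by simp
    then have "int (card {0..<n-1}) > int (card (K0 (n-1) C))" using lt assms(1) by linarith
    then have "{0..<n-1} - K0 (n-1) C \<noteq> {}"
    proof -
      have "\<not> {0..<n-1} \<subseteq> K0 (n-1) C"
      proof
        assume "{0..<n-1} \<subseteq> K0 (n-1) C"
        then have "card {0..<n-1} \<le> card (K0 (n-1) C)" using K0_finite card_mono by blast
        then show False using \<open>int (card {0..<n-1}) > int (card (K0 (n-1) C))\<close> by linarith
      qed
      then show ?thesis by auto
    qed
    define m where "m = Min ({0..<n-1} - K0 (n-1) C)"
    have fm: "finite ({0..<n-1} - K0 (n-1) C)" by simp
    have m_in: "m \<in> {0..<n-1} - K0 (n-1) C" unfolding m_def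
      using Min_in[OF fm \<open>{0..<n-1} - K0 (n-1) C \<noteq> {}\<close>] .
    have m_prev: "m = 0 \<or> m - 1 \<in> K0 (n-1) C"
    proof (rule ccontr)
      assume "\<not> (m = 0 \<or> m - 1 \<in> K0 (n-1) C)"
      then have "m - 1 \<in> {0..<n-1} - K0 (n-1) C" using m_in by auto
      then have "m \<le> m - 1" unfolding m_def using Min_le[OF fm] by blast
      then show False by simp
    qed
    define K' where "K' = insert m (K0 (n-1) C)"
    have K'sub: "K' \<subseteq> {0..<n-1}" unfolding K'_def using m_in \<open>K0 (n-1) C \<subseteq> {0..<n-1}\<close> by auto
    have "card K' = card (K0 (n-1) C) + 1" unfolding K'_def using m_in K0_finite by simp
    then have cK': "card K' < 2 ^ k" using lt by simp
    define D where "D = Sc 0 (n-1) K'"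
    have covD: "\<exists>T\<in>strats_k k n. covered n T = D" unfolding covered_char D_def using K'sub cK' by blast
    have CD: "C \<subseteq> D" unfolding D_def K'_def
      using Sc_K0[OF assms(2) g] Sc_mono[of "K0 (n-1) C" "insert m (K0 (n-1) C)"] by auto
    have "m \<in> D" unfolding D_def Sc_def K'_def using m_in m_prev by auto
    moreover have "m \<notin> C" using m_in unfolding K0_def by auto
    ultimately have "C \<subset> D" using CD by auto
    then show False using m covD unfolding maximal_alt by blast
  qed
  then show "good (n-1) C \<and> card (K0 (n-1) C) = 2 ^ k - 1" using g by simp
next
  assume r: "good (n-1) C \<and> card (K0 (n-1) C) = 2 ^ k - 1"
  have pos: "(2::nat) ^ k \<ge> 1" by simp
  have "K0 (n-1) C \<subseteq> {0..<n-1}" unfolding K0_def by auto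
  moreover have "card (K0 (n-1) C) < 2 ^ k" using r pos by linarith
  ultimately have covC: "\<exists>T\<in>strats_k k n. covered n T = C"
    unfolding covered_char using Sc_K0[OF assms(2)] r by metis
  have "\<not> (\<exists>D. (\<exists>T\<in>strats_k k n. covered n T = D) \<and> C \<subset> D)"
  proof
    assume "\<exists>D. (\<exists>T\<in>strats_k k n. covered n T = D) \<and> C \<subset> D"
    then obtain D K where D: "K \<subseteq> {0..<n-1}" "card K < 2 ^ k" "D = Sc 0 (n-1) K" "C \<subset> D"
      unfolding covered_char by blast
    then obtain x where x: "x \<in> D" "x \<notin> C" by auto
    have Dsub: "D \<subseteq> {0..n-1}" using D(3) unfolding Sc_def by auto
    have "card (K0 (n-1) C) < card (K0 (n-1) D)"
      using K0_strict[of C D "n-1" x] D(4) r x Dsub by auto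
    also have "card (K0 (n-1) D) \<le> card K"
      using K0_sub[OF D(1)] D(3) card_mono finite_subset[OF D(1)] by blast
    finally show False using D(2) r by linarith
  qed
  then show "maximal_covered k n C" using covC unfolding maximal_alt by blast
qed



lemma cyc_alt: "cyc n a m = (\<lambda>w. w mod n) ` {a..a+m-1}"
  unfolding cyc_def by auto

lemma sorted_lt:
  fixes u :: "nat \<Rightarrow> int" and s i j :: nat
  assumes "\<forall>t\<in>{1..<s}. u t < u (t + 1)" "1 \<le> i"
  shows "i < j \<Longrightarrow> j \<le> s \<Longrightarrow> u i < (u j :: int)"
proof (induction j)
  case 0 then show ?case by simp
next
  case (Suc j)
  show ?case
  proof (cases "i = j")
    case True
    then show ?thesis using assms(1,2) Suc.prems by auto
  next
    case False
    then have "u i < u j" using Suc by auto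
    moreover have "u j < u (Suc j)" using assms(1,2) Suc.prems False by auto
    ultimately show ?thesis by simp
  qed
qed

lemma drop_rep:
  assumes rep: "is_rep n C s u l" and j: "j \<in> {1..s}"
    and sub: "\<forall>t\<in>{1..s}-{j}. cyc n (u t) (l2 t) \<subseteq> C"
    and sup: "C \<subseteq> (\<Union>t\<in>{1..s}-{j}. cyc n (u t) (l2 t))"
  shows "is_rep n C (s-1) (\<lambda>t. u (if t < j then t else t+1)) (\<lambda>t. l2 (if t < j then t else t+1))"
proof -
  define sk where "sk t = (if t < j then t else t+1)" for t
  have img: "sk ` {1..s-1} = {1..s} - {j}"
  proof
    show "sk ` {1..s-1} \<subseteq> {1..s} - {j}" using j unfolding sk_def by auto
  next
    show "{1..s} - {j} \<subseteq> sk ` {1..s-1}"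
    proof
      fix t assume t: "t \<in> {1..s} - {j}"
      show "t \<in> sk ` {1..s-1}"
      proof (cases "t < j")
        case True
        then have "sk t = t" "t \<in> {1..s-1}" using t j unfolding sk_def by auto
        then show ?thesis by force
      next
        case False
        then have "sk (t - 1) = t" "t - 1 \<in> {1..s-1}" using t j unfolding sk_def by auto
        then show ?thesis by force
      qed
    qed
  qed
  have sorted: "\<forall>t\<in>{1..<s}. u t < u (t + 1)" "\<forall>t\<in>{1..s}. 0 \<le> u t \<and> u t \<le> n - 1"
    and Ceq: "C = (\<Union>t\<in>{1..s}. cyc n (u t) (l t))"
    using rep unfolding is_rep_def by auto
  have "C = (\<Union>t\<in>{1..s}-{j}. cyc n (u t) (l2 t))" using sub sup by auto
  also have "\<dots> = (\<Union>t\<in>sk ` {1..s-1}. cyc n (u t) (l2 t))" using img by simp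
  also have "\<dots> = (\<Union>t\<in>{1..s-1}. cyc n (u (sk t)) (l2 (sk t)))" by simp
  finally have U: "C = (\<Union>t\<in>{1..s-1}. cyc n (u (sk t)) (l2 (sk t)))" .
  have R: "\<forall>t\<in>{1..s-1}. 0 \<le> u (sk t) \<and> u (sk t) \<le> n - 1"
    using sorted(2) img by blast
  have S: "\<forall>t\<in>{1..<s-1}. u (sk t) < u (sk (t+1))"
  proof
    fix t assume t: "t \<in> {1..<s-1}"
    have "1 \<le> sk t" "sk t < sk (t+1)" "sk (t+1) \<le> s" using t j unfolding sk_def by auto
    then show "u (sk t) < u (sk (t+1))" using sorted_lt[OF sorted(1)] by blast
  qed
  show ?thesis unfolding is_rep_def using U R S unfolding sk_def by simp
qed

lemma cyc_full:
  assumes "m \<ge> n" "n > 0"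
  shows "{0..n-1} \<subseteq> cyc n a m"
proof
  fix x assume x: "x \<in> {0..n-1}"
  define w where "w = a + (x - a) mod n"
  have "a \<le> w" "w \<le> a + m - 1" using assms unfolding w_def
    by (simp_all add: pos_mod_sign) (smt (verit) pos_mod_bound)
  moreover have "w mod n = x"
  proof -
    have "w mod n = (a + (x - a)) mod n" unfolding w_def by (simp add: mod_add_right_eq)
    also have "\<dots> = x" using x by simp
    finally show ?thesis .
  qed
  ultimately show "x \<in> cyc n a m" unfolding cyc_def by auto
qed

lemma cyc_sub: "n > 0 \<Longrightarrow> cyc n a m \<subseteq> {0..n-1}"
  unfolding cyc_def by (auto simp: pos_mod_sign)

lemma cyc_merge:
  assumes "a \<le> c" "c \<le> a + la"
  shows "cyc n a (max (a+la) (c+lb) - a) = cyc n a la \<union> cyc n c lb"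
proof -
  have "{a..a + (max (a+la) (c+lb) - a) - 1} = {a..a+la-1} \<union> {c..c+lb-1}"
    using assms by auto
  then show ?thesis unfolding cyc_alt by (simp add: image_Un)
qed

lemma cyc_shift: "cyc n (a + n) m = cyc n a m"
proof -
  have "(\<lambda>w. w mod n) ` {a+n..a+n+m-1} = (\<lambda>w. w mod n) ` {a..a+m-1}"
  proof
    show "(\<lambda>w. w mod n) ` {a+n..a+n+m-1} \<subseteq> (\<lambda>w. w mod n) ` {a..a+m-1}"
    proof
      fix y assume "y \<in> (\<lambda>w. w mod n) ` {a+n..a+n+m-1}"
      then obtain w where w: "w \<in> {a+n..a+n+m-1}" "y = w mod n" by auto
      then have "y = (w - n) mod n" "w - n \<in> {a..a+m-1}" by (auto simp: mod_diff_right_eq[symmetric])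
      then show "y \<in> (\<lambda>w. w mod n) ` {a..a+m-1}" by blast
    qed
  next
    show "(\<lambda>w. w mod n) ` {a..a+m-1} \<subseteq> (\<lambda>w. w mod n) ` {a+n..a+n+m-1}"
    proof
      fix y assume "y \<in> (\<lambda>w. w mod n) ` {a..a+m-1}"
      then obtain w where w: "w \<in> {a..a+m-1}" "y = w mod n" by auto
      then have "y = (w + n) mod n" "w + n \<in> {a+n..a+n+m-1}" by auto
      then show "y \<in> (\<lambda>w. w mod n) ` {a+n..a+n+m-1}" by blast
    qed
  qed
  then show ?thesis unfolding cyc_alt by (simp add: add.commute add.left_commute)
qed



locale mr =
  fixes n :: int and C :: "int set" and s :: nat and u l :: "nat \<Rightarrow> int"
  assumes n2: "n \<ge> 2" and Csub: "C \<subseteq> {0..n-1}" and s1: "s \<ge> 1"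
    and mrep: "min_rep n C s u l" and notV: "C \<noteq> {0..n-1}"
begin

lemma rep: "is_rep n C s u l" using mrep unfolding min_rep_def by simp

lemma srt: "\<forall>t\<in>{1..<s}. u t < u (t + 1)" using rep unfolding is_rep_def by simp
lemma ub: "t \<in> {1..s} \<Longrightarrow> 0 \<le> u t \<and> u t \<le> n - 1" using rep unfolding is_rep_def by simp
lemma Ceq: "C = (\<Union>t\<in>{1..s}. cyc n (u t) (l t))" using rep unfolding is_rep_def by simp

lemma no_drop:
  assumes j: "j \<in> {1..s}"
    and sub: "\<forall>t\<in>{1..s}-{j}. cyc n (u t) (l2 t) \<subseteq> C"
    and sup: "C \<subseteq> (\<Union>t\<in>{1..s}-{j}. cyc n (u t) (l2 t))"
  shows False
proof -
  have "is_rep n C (s-1) (\<lambda>t. u (if t < j then t else t+1)) (\<lambda>t. l2 (if t < j then t else t+1))"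
    using drop_rep[OF rep j sub sup] .
  then have "s \<le> s - 1" using mrep unfolding min_rep_def by blast
  then show False using s1 by simp
qed

lemma no_merge:
  assumes i: "i \<in> {1..s}" and j: "j \<in> {1..s}" and ij: "i \<noteq> j"
    and eq: "cyc n (u i) L = cyc n (u i) (l i) \<union> cyc n (u j) (l j)"
  shows False
proof (rule no_drop[OF j, of "l(i := L)"])
  show "\<forall>t\<in>{1..s}-{j}. cyc n (u t) ((l(i := L)) t) \<subseteq> C"
    using eq i Ceq j by auto
  show "C \<subseteq> (\<Union>t\<in>{1..s}-{j}. cyc n (u t) ((l(i := L)) t))"
  proof
    fix x assume "x \<in> C"
    then obtain t where t: "t \<in> {1..s}" "x \<in> cyc n (u t) (l t)" using Ceq by auto
    show "x \<in> (\<Union>t\<in>{1..s}-{j}. cyc n (u t) ((l(i := L)) t))"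
    proof (cases "t = j \<or> t = i")
      case True
      then have "x \<in> cyc n (u i) L" using eq t by auto
      then show ?thesis using i ij by auto
    next
      case False
      then show ?thesis using t by auto
    qed
  qed
qed

lemma l_pos: "t \<in> {1..s} \<Longrightarrow> l t \<ge> 1"
proof (rule ccontr)
  assume t: "t \<in> {1..s}" and "\<not> l t \<ge> 1"
  then have e: "cyc n (u t) (l t) = {}" unfolding cyc_def by auto
  show False
  proof (rule no_drop[OF t, of l])
    show "\<forall>t\<in>{1..s}-{t}. cyc n (u t) (l t) \<subseteq> C" using Ceq by auto
    show "C \<subseteq> (\<Union>t'\<in>{1..s}-{t}. cyc n (u t') (l t'))" using Ceq e by auto
  qed
qed

lemma gap: "t \<in> {1..<s} \<Longrightarrow> u t + l t < u (t+1)"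
proof (rule ccontr)
  assume t: "t \<in> {1..<s}" and "\<not> u t + l t < u (t+1)"
  then have c: "u (t+1) \<le> u t + l t" by simp
  have "u t < u (t+1)" using srt t by blast
  then have "u t \<le> u (t+1)" by simp
  then have "cyc n (u t) (max (u t + l t) (u (t+1) + l (t+1)) - u t) = cyc n (u t) (l t) \<union> cyc n (u (t+1)) (l (t+1))"
    using cyc_merge c by blast
  then show False using no_merge[of t "t+1"] t by auto
qed

lemma gapw: "u s + l s < u 1 + n"
proof (rule ccontr)
  assume "\<not> u s + l s < u 1 + n"
  then have c: "u 1 + n \<le> u s + l s" by simp
  show False
  proof (cases "s = 1")
    case True
    then have "l 1 \<ge> n" using c by simp
    then have "{0..n-1} \<subseteq> C" using cyc_full[of n "l 1" "u 1"] n2 Ceq True by auto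
    then show False using Csub notV by auto
  next
    case False
    have "u s \<le> u 1 + n" using ub[of s] ub[of 1] s1 by auto
    then have "cyc n (u s) (max (u s + l s) (u 1 + n + l 1) - u s) = cyc n (u s) (l s) \<union> cyc n (u 1 + n) (l 1)"
      using cyc_merge c by blast
    then show False using no_merge[of s 1] False s1 cyc_shift by auto
  qed
qed

definition e :: "nat \<Rightarrow> int" where "e t = u t + l t"
definition nxt :: "nat \<Rightarrow> int" where "nxt t = (if t < s then u (t+1) else u 1 + n)"

lemma u_lt: "1 \<le> i \<Longrightarrow> i < j \<Longrightarrow> j \<le> s \<Longrightarrow> u i < u j"
  using sorted_lt[OF srt] by blast

lemma e_lt_u: "1 \<le> i \<Longrightarrow> i < j \<Longrightarrow> j \<le> s \<Longrightarrow> e i < u j"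
proof -
  assume a: "1 \<le> i" "i < j" "j \<le> s"
  have "e i < u (i+1)" using gap[of i] a unfolding e_def by auto
  moreover have "u (i+1) \<le> u j" using u_lt[of "i+1" j] a by (cases "i + 1 = j") auto
  ultimately show "e i < u j" by simp
qed

lemma e_nxt: "t \<in> {1..s} \<Longrightarrow> e t < nxt t"
  using gap gapw unfolding e_def nxt_def by auto

lemma u1_le: "t \<in> {1..s} \<Longrightarrow> u 1 \<le> u t"
  using u_lt[of 1 t] by (cases "t = 1") auto

lemma e_bound: "t \<in> {1..s} \<Longrightarrow> e t < u 1 + n"
proof -
  assume t: "t \<in> {1..s}"
  show "e t < u 1 + n"
  proof (cases "t = s")
    case True then show ?thesis using gapw unfolding e_def by simp
  next
    case False
    then have "e t < u s" using e_lt_u[of t s] t by auto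
    also have "u s < e s" using l_pos[of s] s1 unfolding e_def by auto
    also have "e s < u 1 + n" using gapw unfolding e_def by simp
    finally show ?thesis .
  qed
qed

lemma nxt_le: "t \<in> {1..s} \<Longrightarrow> nxt t \<le> u 1 + n"
  using ub[of "t+1"] ub[of 1] s1 unfolding nxt_def by auto

end



lemma inj_mod: "(n::int) > 0 \<Longrightarrow> inj_on (\<lambda>w. w mod n) {a..<a+n}"
proof (rule inj_onI)
  fix x y assume n: "n > 0" and x: "x \<in> {a..<a+n}" and y: "y \<in> {a..<a+n}" and eq: "x mod n = y mod n"
  have "(x - a) mod n = (y - a) mod n" using eq by (metis mod_diff_left_eq)
  moreover have "(x - a) mod n = x - a" using x by (simp add: mod_pos_pos_trivial)
  moreover have "(y - a) mod n = y - a" using y by (simp add: mod_pos_pos_trivial)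
  ultimately show "x = y" by simp
qed

context mr begin

definition inA :: "int \<Rightarrow> bool" where "inA w \<longleftrightarrow> (\<exists>t\<in>{1..s}. u t \<le> w \<and> w < e t)"

lemma inA_mem: "inA w \<Longrightarrow> w mod n \<in> C"
  unfolding inA_def e_def using Ceq unfolding cyc_def by auto

lemma mem_inA:
  assumes w: "u 1 \<le> w" "w < u 1 + n" and m: "w mod n \<in> C"
  shows "inA w"
proof -
  obtain t where t: "t \<in> {1..s}" "w mod n \<in> cyc n (u t) (l t)" using m Ceq by auto
  then obtain w' where w': "u t \<le> w'" "w' \<le> u t + l t - 1" "w' mod n = w mod n"
    unfolding cyc_def by auto
  have "w' \<in> {u 1..<u 1 + n}" using w' u1_le[OF t(1)] e_bound[OF t(1)] unfolding e_def by auto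
  moreover have "w \<in> {u 1..<u 1 + n}" using w by auto
  ultimately have "w' = w" using inj_mod[of n "u 1"] n2 w'(3) unfolding inj_on_def by auto
  then show ?thesis unfolding inA_def e_def using t w' by auto
qed

lemma gap_not:
  assumes t: "t \<in> {1..s}" and w: "e t \<le> w" "w < nxt t"
  shows "\<not> inA w"
proof
  assume "inA w"
  then obtain t' where t': "t' \<in> {1..s}" "u t' \<le> w" "w < e t'" unfolding inA_def by auto
  show False
  proof (cases "t' \<le> t")
    case True
    have "e t' \<le> e t"
    proof (cases "t' = t")
      case False
      then have "e t' < u t" using e_lt_u[of t' t] True t t' by auto
      also have "u t < e t" using l_pos[OF t] unfolding e_def by simp
      finally show ?thesis by simp
    qed simp
    then show False using w t' by simp
  next
    case False
    then have "t < s" "u (t+1) \<le> u t'" using t t' u_lt[of "t+1" t'] by (auto, cases "t+1 = t'", auto)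
    then show False using w t' unfolding nxt_def by auto
  qed
qed

lemma locate:
  assumes w: "u 1 \<le> w" "w < u 1 + n" and nA: "\<not> inA w"
  shows "\<exists>t\<in>{1..s}. e t \<le> w \<and> w < nxt t"
proof -
  define T where "T = {t\<in>{1..s}. u t \<le> w}"
  have "1 \<in> T" unfolding T_def using s1 w by auto
  have fT: "finite T" unfolding T_def by simp
  define t where "t = Max T"
  have tT: "t \<in> T" unfolding t_def using Max_in[OF fT] \<open>1 \<in> T\<close> by auto
  have t1: "t \<in> {1..s}" "u t \<le> w" using tT unfolding T_def by auto
  have "e t \<le> w" using nA t1 unfolding inA_def by force
  moreover have "w < nxt t"
  proof (cases "t < s")
    case True
    have "t + 1 \<notin> T"
    proof
      assume "t + 1 \<in> T"
      then have "t + 1 \<le> t" unfolding t_def using Max_ge[OF fT] by blast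
      then show False by simp
    qed
    then show ?thesis using True unfolding T_def nxt_def by auto
  next
    case False
    then show ?thesis using w unfolding nxt_def by simp
  qed
  ultimately show ?thesis using t1 by blast
qed

lemma card_union:
  assumes d: "0 \<le> d" "d \<le> 1"
  shows "int (card (\<Union>t\<in>{1..s}. cyc n (u t - d) (l t + d))) = (\<Sum>t=1..s. l t + d)"
proof -
  define A where "A t = {u t - d .. u t + l t - 1}" for t
  have U: "(\<Union>t\<in>{1..s}. cyc n (u t - d) (l t + d)) = (\<lambda>w. w mod n) ` (\<Union>t\<in>{1..s}. A t)"
    unfolding A_def cyc_alt by (simp add: image_UN)
  have W: "(\<Union>t\<in>{1..s}. A t) \<subseteq> {u 1 - 1..<u 1 - 1 + n}"
  proof
    fix x assume "x \<in> (\<Union>t\<in>{1..s}. A t)"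
    then obtain t where t: "t \<in> {1..s}" "x \<in> A t" by auto
    then show "x \<in> {u 1 - 1..<u 1 - 1 + n}"
      using u1_le[OF t(1)] e_bound[OF t(1)] d unfolding A_def e_def by auto
  qed
  have "card ((\<lambda>w. w mod n) ` (\<Union>t\<in>{1..s}. A t)) = card (\<Union>t\<in>{1..s}. A t)"
    using card_image inj_on_subset[OF inj_mod W] n2 by simp
  also have "\<dots> = (\<Sum>t\<in>{1..s}. card (A t))"
  proof (rule card_UN_disjoint)
    show "finite {1..s}" by simp
    show "\<forall>i\<in>{1..s}. finite (A i)" unfolding A_def by simp
    show "\<forall>i\<in>{1..s}. \<forall>j\<in>{1..s}. i \<noteq> j \<longrightarrow> A i \<inter> A j = {}"
    proof (intro ballI impI)
      fix i j assume i: "i \<in> {1..s}" and j: "j \<in> {1..s}" and ij: "i \<noteq> j"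
      show "A i \<inter> A j = {}"
      proof (cases "i < j")
        case True
        then have "e i < u j" using e_lt_u i j by auto
        then show ?thesis unfolding A_def e_def using d by auto
      next
        case False
        then have "e j < u i" using e_lt_u i j ij by auto
        then show ?thesis unfolding A_def e_def using d by auto
      qed
    qed
  qed
  finally have "int (card (\<Union>t\<in>{1..s}. cyc n (u t - d) (l t + d))) = (\<Sum>t\<in>{1..s}. int (card (A t)))"
    using U by simp
  also have "\<dots> = (\<Sum>t\<in>{1..s}. l t + d)"
  proof (rule sum.cong)
    fix t assume t: "t \<in> {1..s}"
    have "card (A t) = nat (l t + d)" unfolding A_def by simp
    then show "int (card (A t)) = l t + d" using l_pos[OF t] d by simp
  qed simp
  finally show ?thesis .
qed

lemma card_C: "int (card C) = (\<Sum>t=1..s. l t)"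
  using card_union[of 0] Ceq by simp

definition Pset :: "int set" where "Pset = (\<lambda>x. (x - 1) mod n) ` C"

lemma cyc_ext:
  assumes "m \<ge> 1"
  shows "cyc n (a - 1) (m + 1) = cyc n a m \<union> (\<lambda>x. (x - 1) mod n) ` cyc n a m"
proof -
  have IM: "(\<lambda>w. w - 1) ` {a..a+m-1} = {a-1..a+m-2}"
  proof
    show "(\<lambda>w. w - 1) ` {a..a+m-1} \<subseteq> {a-1..a+m-2}" by auto
    show "{a-1..a+m-2} \<subseteq> (\<lambda>w. w - 1) ` {a..a+m-1}"
    proof
      fix x assume "x \<in> {a-1..a+m-2}"
      then have "x + 1 \<in> {a..a+m-1}" "x = (x+1) - 1" by auto
      then show "x \<in> (\<lambda>w. w - 1) ` {a..a+m-1}" by blast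
    qed
  qed
  have "(\<lambda>x. (x - 1) mod n) ` cyc n a m = (\<lambda>w. (w mod n - 1) mod n) ` {a..a+m-1}"
    unfolding cyc_alt image_image by simp
  also have "\<dots> = (\<lambda>w. (w - 1) mod n) ` {a..a+m-1}"
    by (intro image_cong) (simp_all add: mod_diff_left_eq)
  also have "\<dots> = (\<lambda>w. w mod n) ` {a-1..a+m-2}" by (simp only: IM[symmetric] image_image)
  finally have P: "(\<lambda>x. (x - 1) mod n) ` cyc n a m = (\<lambda>w. w mod n) ` {a-1..a+m-2}" .
  have "{a - 1..a - 1 + (m + 1) - 1} = {a..a+m-1} \<union> {a-1..a+m-2}" using assms by auto
  then show ?thesis unfolding P unfolding cyc_alt by (simp add: image_Un)
qed

lemma CP: "C \<union> Pset = (\<Union>t\<in>{1..s}. cyc n (u t - 1) (l t + 1))"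
proof -
  have "(\<Union>t\<in>{1..s}. cyc n (u t - 1) (l t + 1)) =
        (\<Union>t\<in>{1..s}. cyc n (u t) (l t) \<union> (\<lambda>x. (x - 1) mod n) ` cyc n (u t) (l t))"
  proof (rule SUP_cong[OF refl])
    fix t assume t: "t \<in> {1..s}"
    have "l t \<ge> 1" using l_pos[OF t] by simp
    then show "cyc n (u t - 1) (l t + 1) = cyc n (u t) (l t) \<union> (\<lambda>x. (x - 1) mod n) ` cyc n (u t) (l t)"
      by (rule cyc_ext)
  qed
  also have "\<dots> = (\<Union>t\<in>{1..s}. cyc n (u t) (l t)) \<union> (\<lambda>x. (x - 1) mod n) ` (\<Union>t\<in>{1..s}. cyc n (u t) (l t))"
    by (simp add: UN_Un_distrib image_UN)
  also have "\<dots> = C \<union> Pset" unfolding Pset_def by (simp only: Ceq[symmetric])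
  finally show ?thesis by simp
qed

lemma card_CP: "int (card (C \<union> Pset)) = (\<Sum>t=1..s. l t) + int s"
  using card_union[of 1] CP by (simp add: sum.distrib)

lemma pred_mod: "0 \<le> y \<Longrightarrow> y \<le> n - 1 \<Longrightarrow> (y - 1) mod n = (if y = 0 then n - 1 else y - 1)"
proof -
  assume y: "0 \<le> y" "y \<le> n - 1"
  show ?thesis
  proof (cases "y = 0")
    case True
    show ?thesis using True n2 by (simp add: zmod_minus1)
  next
    case False
    then show ?thesis using y by (simp add: mod_pos_pos_trivial)
  qed
qed

lemma K0_eq: "K0 (n-1) C = (C \<union> Pset) - {n-1}"
proof -
  have m1: "-1 mod n = n - 1" using n2 by (simp add: zmod_minus1)
  have P: "Pset = {y - 1 | y. y \<in> C \<and> y \<noteq> 0} \<union> (if 0 \<in> C then {n-1} else {})"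
  proof -
    have "Pset = (\<lambda>y. if y = 0 then n - 1 else y - 1) ` C"
      unfolding Pset_def using pred_mod Csub m1 by (intro image_cong) auto
    then show ?thesis by auto
  qed
  show ?thesis unfolding K0_def P using Csub by (auto; force)
qed

lemma card_K0: "int (card (K0 (n-1) C)) = (\<Sum>t=1..s. l t) + int s - (if 0 \<in> C \<or> n - 1 \<in> C then 1 else 0)"
proof -
  have fin: "finite (C \<union> Pset)" using Csub finite_subset unfolding Pset_def by auto
  have "n - 1 \<in> C \<union> Pset \<longleftrightarrow> 0 \<in> C \<or> n - 1 \<in> C"
  proof -
    have "n - 1 \<in> Pset \<longleftrightarrow> 0 \<in> C"
    proof
      assume "n - 1 \<in> Pset"
      then obtain y where y: "y \<in> C" "n - 1 = (y - 1) mod n" unfolding Pset_def by auto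
      then show "0 \<in> C" using pred_mod[of y] Csub by (auto split: if_splits)
    next
      assume "0 \<in> C"
      have "-1 mod n = n - 1" using n2 by (simp add: zmod_minus1)
      then show "n - 1 \<in> Pset" unfolding Pset_def using \<open>0 \<in> C\<close> by (intro image_eqI[of _ _ 0]) auto
    qed
    then show ?thesis by auto
  qed
  then show ?thesis
  proof (cases "0 \<in> C \<or> n - 1 \<in> C")
    case True
    then have "n - 1 \<in> C \<union> Pset" using \<open>n - 1 \<in> C \<union> Pset \<longleftrightarrow> 0 \<in> C \<or> n - 1 \<in> C\<close> by simp
    then have "card (C \<union> Pset - {n-1}) = card (C \<union> Pset) - 1" using fin by (simp add: card_Diff_singleton)
    moreover have "card (C \<union> Pset) > 0" using fin \<open>n - 1 \<in> C \<union> Pset\<close> card_gt_0_iff by blast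
    ultimately have "int (card (C \<union> Pset - {n-1})) = int (card (C \<union> Pset)) - 1" by simp
    then show ?thesis unfolding K0_eq using card_CP True by simp
  next
    case False
    then have "n - 1 \<notin> C \<union> Pset" using \<open>n - 1 \<in> C \<union> Pset \<longleftrightarrow> 0 \<in> C \<or> n - 1 \<in> C\<close> by simp
    then show ?thesis unfolding K0_eq using card_CP False by simp
  qed
qed

end



context mr begin

lemma mod_self_small: "0 \<le> x \<Longrightarrow> x \<le> n - 1 \<Longrightarrow> x mod n = x"
  by (simp add: mod_pos_pos_trivial)

lemma start_iff: "(0 \<notin> C \<and> 1 \<in> C) \<longleftrightarrow> u 1 = 1"
proof
  assume a: "0 \<notin> C \<and> 1 \<in> C"
  have u1: "0 \<le> u 1" "u 1 \<le> n - 1" using ub[of 1] s1 by auto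
  have t1: "(1::nat) \<in> {1..s}" using s1 by simp
  show "u 1 = 1"
  proof (cases "u 1 \<le> 1")
    case True
    have "1 mod n \<in> C" using a n2 by simp
    then have "inA 1" using mem_inA[of 1] True n2 u1 by auto
    then obtain t where t: "t \<in> {1..s}" "u t \<le> 1" "1 < e t" unfolding inA_def by auto
    have "u t = 1"
    proof (rule ccontr)
      assume "u t \<noteq> 1"
      then have "inA 0" unfolding inA_def using t by (intro bexI[of _ t]) auto
      then show False using inA_mem[of 0] a by simp
    qed
    show "u 1 = 1"
    proof (rule ccontr)
      assume "u 1 \<noteq> 1"
      then have "u 1 = 0" using True u1 by simp
      then have "inA 0" unfolding inA_def using t1 l_pos[OF t1] unfolding e_def by force
      then show False using inA_mem[of 0] a by simp
    qed
  next
    case False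
    have "(n + 1) mod n \<in> C" using a n2 by simp
    then have "inA (n + 1)" using mem_inA[of "n+1"] False u1 by auto
    then obtain t where t: "t \<in> {1..s}" "u t \<le> n + 1" "n + 1 < e t" unfolding inA_def by auto
    have "inA n" unfolding inA_def using t ub[OF t(1)] by (intro bexI[of _ t]) auto
    then show ?thesis using inA_mem[of n] a by simp
  qed
next
  assume u1: "u 1 = 1"
  have t1: "(1::nat) \<in> {1..s}" using s1 by simp
  have "inA 1" unfolding inA_def using t1 u1 l_pos[OF t1] unfolding e_def by force
  then have "1 \<in> C" using inA_mem[of 1] n2 by simp
  moreover have "0 \<notin> C"
  proof
    assume "0 \<in> C"
    then have "n mod n \<in> C" by simp
    then have "inA n" using mem_inA[of n] u1 n2 by auto
    then obtain t where t: "t \<in> {1..s}" "u t \<le> n" "n < e t" unfolding inA_def by auto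
    then show False using e_bound[OF t(1)] u1 by simp
  qed
  ultimately show "0 \<notin> C \<and> 1 \<in> C" by simp
qed

lemma end_iff: "(n - 1 \<notin> C \<and> n - 2 \<in> C) \<longleftrightarrow> e s = n - 1"
proof
  assume a: "n - 1 \<notin> C \<and> n - 2 \<in> C"
  have u1: "0 \<le> u 1" "u 1 \<le> n - 1" using ub[of 1] s1 by auto
  have nA: "\<not> inA (n - 1)" using inA_mem[of "n-1"] a mod_self_small[of "n-1"] n2 by auto
  show "e s = n - 1"
  proof (cases "u 1 \<le> n - 2")
    case True
    have "(n-2) mod n \<in> C" using a mod_self_small[of "n-2"] n2 by simp
    then have "inA (n-2)" using mem_inA[of "n-2"] True n2 u1 by auto
    then obtain t where t: "t \<in> {1..s}" "u t \<le> n - 2" "n - 2 < e t" unfolding inA_def by auto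
    have et: "e t = n - 1"
    proof (rule ccontr)
      assume "e t \<noteq> n - 1"
      then have "inA (n-1)" unfolding inA_def using t by (intro bexI[of _ t]) auto
      then show False using nA by simp
    qed
    have "t = s"
    proof (rule ccontr)
      assume "t \<noteq> s"
      then have "e t < u s" using e_lt_u[of t s] t by auto
      then show False using et ub[of s] s1 by auto
    qed
    then show ?thesis using et by simp
  next
    case False
    have "(2*n-2) mod n = (n - 2) mod n"
    proof -
      have "2*n - 2 = (n - 2) + n" by simp
      then show ?thesis by (metis mod_add_self2)
    qed
    then have "(2*n-2) mod n \<in> C" using a mod_self_small[of "n-2"] n2 by simp
    then have "inA (2*n-2)" using mem_inA[of "2*n-2"] False u1 n2 by auto
    then obtain t where t: "t \<in> {1..s}" "u t \<le> 2*n-2" "2*n-2 < e t" unfolding inA_def by auto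
    have "inA (n-1)" unfolding inA_def using t ub[OF t(1)] n2 by (intro bexI[of _ t]) auto
    then show ?thesis using nA by simp
  qed
next
  assume es: "e s = n - 1"
  have ts: "s \<in> {1..s}" using s1 by simp
  have "inA (n-2)" unfolding inA_def using ts es l_pos[OF ts] unfolding e_def by force
  then have "n - 2 \<in> C" using inA_mem[of "n-2"] mod_self_small[of "n-2"] n2 by simp
  moreover have "n - 1 \<notin> C"
  proof
    assume "n - 1 \<in> C"
    then have "(n-1) mod n \<in> C" using mod_self_small[of "n-1"] n2 by simp
    moreover have "u 1 \<le> n - 1" "0 \<le> u 1" using ub[of 1] s1 by auto
    ultimately have "inA (n-1)" using mem_inA[of "n-1"] by auto
    then obtain t where t: "t \<in> {1..s}" "u t \<le> n-1" "n-1 < e t" unfolding inA_def by auto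
    show False
    proof (cases "t = s")
      case True then show False using t es by simp
    next
      case False
      then have "e t < u s" using e_lt_u[of t s] t by auto
      then show False using t ub[of s] s1 by auto
    qed
  qed
  ultimately show "n - 1 \<notin> C \<and> n - 2 \<in> C" by simp
qed

lemma cycbad:
  assumes "w mod n \<notin> C" "(w - 1) mod n \<in> C" "(w + 1) mod n \<in> C"
  shows "\<not> good (n-1) C"
proof
  assume g: "good (n-1) C"
  define x where "x = w mod n"
  have x: "0 \<le> x" "x \<le> n - 1" unfolding x_def using n2 by (auto simp: pos_mod_sign)
  have m1: "(w - 1) mod n = (x - 1) mod n" unfolding x_def by (simp add: mod_diff_left_eq)
  have p1: "(w + 1) mod n = (x + 1) mod n" unfolding x_def by (simp add: mod_add_left_eq)
  have "x = 0 \<or> x - 1 \<in> C"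
  proof (cases "x = 0")
    case False
    then have "(x - 1) mod n = x - 1" using x by (simp add: mod_pos_pos_trivial)
    then show ?thesis using assms(2) m1 by simp
  qed simp
  moreover have "x = n - 1 \<or> x + 1 \<in> C"
  proof (cases "x = n - 1")
    case False
    then have "(x + 1) mod n = x + 1" using x by (simp add: mod_pos_pos_trivial)
    then show ?thesis using assms(3) p1 by simp
  qed simp
  moreover have "x \<notin> C" using assms(1) x_def by simp
  ultimately show False using g x unfolding good_def by blast
qed

lemma good_iff:
  "good (n-1) C \<longleftrightarrow> (u 1 \<noteq> 1 \<and> e s \<noteq> n - 1) \<and> (\<forall>t\<in>{1..s}. nxt t - e t \<ge> 2)"
proof
  assume g: "good (n-1) C"
  have "u 1 \<noteq> 1"
  proof
    assume "u 1 = 1"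
    then have "0 \<notin> C" "1 \<in> C" using start_iff by auto
    then show False using g n2 unfolding good_def by force
  qed
  moreover have "e s \<noteq> n - 1"
  proof
    assume "e s = n - 1"
    then have "n - 1 \<notin> C" "n - 2 \<in> C" using end_iff by auto
    moreover have "n - 1 - 1 = n - 2" by simp
    ultimately show False using g n2 unfolding good_def by (metis order_refl diff_ge_0_iff_ge
        add_le_same_cancel1 dual_order.trans one_le_numeral)
  qed
  moreover have "\<forall>t\<in>{1..s}. nxt t - e t \<ge> 2"
  proof
    fix t assume t: "t \<in> {1..s}"
    show "nxt t - e t \<ge> 2"
    proof (rule ccontr)
      assume "\<not> nxt t - e t \<ge> 2"
      then have nx: "nxt t = e t + 1" using e_nxt[OF t] by simp
      have "\<not> inA (e t)" using gap_not[OF t, of "e t"] nx by simp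
      moreover have "u 1 \<le> e t" "e t < u 1 + n"
        using u1_le[OF t] l_pos[OF t] e_bound[OF t] unfolding e_def by auto
      ultimately have a1: "(e t) mod n \<notin> C" using mem_inA by blast
      have "inA (e t - 1)" unfolding inA_def using t l_pos[OF t] unfolding e_def by force
      then have a2: "(e t - 1) mod n \<in> C" using inA_mem by blast
      have a3: "(e t + 1) mod n \<in> C"
      proof (cases "t < s")
        case True
        have t1: "t + 1 \<in> {1..s}" using True by simp
        have "inA (u (t+1))" unfolding inA_def using t1 l_pos[OF t1] unfolding e_def by force
        then show ?thesis using inA_mem nx True unfolding nxt_def by simp
      next
        case False
        have t1: "(1::nat) \<in> {1..s}" using s1 by simp
        have "inA (u 1)" unfolding inA_def using t1 l_pos[OF t1] unfolding e_def by force
        then have "(u 1) mod n \<in> C" using inA_mem by blast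
        moreover have "(u 1 + n) mod n = (u 1) mod n" by simp
        moreover have "e t + 1 = u 1 + n" using nx False unfolding nxt_def by simp
        ultimately show ?thesis by simp
      qed
      show False using cycbad[OF a1 a2 a3] g by simp
    qed
  qed
  ultimately show "(u 1 \<noteq> 1 \<and> e s \<noteq> n - 1) \<and> (\<forall>t\<in>{1..s}. nxt t - e t \<ge> 2)" by simp
next
  assume r: "(u 1 \<noteq> 1 \<and> e s \<noteq> n - 1) \<and> (\<forall>t\<in>{1..s}. nxt t - e t \<ge> 2)"
  have u1: "0 \<le> u 1" "u 1 \<le> n - 1" using ub[of 1] s1 by auto
  show "good (n-1) C" unfolding good_def
  proof (intro allI impI notI)
    fix x assume x: "0 \<le> x \<and> x \<le> n - 1 \<and> x \<notin> C"
      and b: "(x = 0 \<or> x - 1 \<in> C) \<and> (x = n - 1 \<or> x + 1 \<in> C)"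
    define w where "w = (if u 1 \<le> x then x else x + n)"
    have wm: "w mod n = x" unfolding w_def using x mod_self_small by auto
    have ww: "u 1 \<le> w" "w < u 1 + n" unfolding w_def using x u1 by auto
    have "\<not> inA w" using inA_mem wm x by auto
    then obtain t where t: "t \<in> {1..s}" "e t \<le> w" "w < nxt t" using locate ww by blast
    have g2: "nxt t - e t \<ge> 2" using r t by auto
    have m1: "(w - 1) mod n = (x - 1) mod n" using wm by (metis mod_diff_left_eq)
    have p1: "(w + 1) mod n = (x + 1) mod n" using wm by (metis mod_add_left_eq)
    show False
    proof (cases "e t \<le> w - 1")
      case True
      have "\<not> inA (w - 1)" using gap_not[OF t(1)] True t by simp
      moreover have "u 1 \<le> w - 1" using True u1_le[OF t(1)] l_pos[OF t(1)] unfolding e_def by simp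
      ultimately have "(w - 1) mod n \<notin> C" using mem_inA ww by auto
      then have x0: "x = 0"
      proof (cases "x = 0")
        case False
        then have "(x - 1) mod n = x - 1" using x by (simp add: mod_pos_pos_trivial)
        then show ?thesis using b m1 \<open>(w - 1) mod n \<notin> C\<close> by simp
      qed simp
      then have "1 \<in> C" "0 \<notin> C" using b x n2 by auto
      then show False using start_iff r by simp
    next
      case False
      then have "w + 1 < nxt t" using g2 t by simp
      then have "\<not> inA (w + 1)" using gap_not[OF t(1)] t by simp
      moreover have "w + 1 < u 1 + n" using \<open>w + 1 < nxt t\<close> nxt_le[OF t(1)] by simp
      ultimately have "(w + 1) mod n \<notin> C" using mem_inA ww by auto
      then have x0: "x = n - 1"
      proof (cases "x = n - 1")
        case False
        then have "(x + 1) mod n = x + 1" using x by (simp add: mod_pos_pos_trivial)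
        then show ?thesis using b p1 \<open>(w + 1) mod n \<notin> C\<close> by simp
      qed simp
      then have "n - 2 \<in> C" "n - 1 \<notin> C" using b x n2 by (auto simp: algebra_simps)
      then show False using end_iff r by simp
    qed
  qed
qed

end



theorem proposition3p1:
  fixes k :: nat and n :: int and C :: "int set" and s :: nat and u l :: "nat \<Rightarrow> int"
  assumes "k \<ge> 2" and "n > 2 ^ k"
    and "C \<subseteq> {0..n - 1}"
    and "s \<ge> 1"
    and "min_rep n C s u l"
  shows "maximal_covered k n C \<longleftrightarrow>
     (u 1 \<noteq> 1 \<and> u s + l s - 1 \<noteq> n - 2) \<and>
     ((\<forall>t\<in>{1..<s}. u (t + 1) - (u t + l t) \<ge> 2) \<and> u 1 - (u s + l s - n) \<ge> 2) \<and>
     (let c = 2 ^ k - 2 in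
        (if {0, n - 1} \<inter> C = {} then (\<Sum>t=1..s. l t) = c + 1 - int s
         else (\<Sum>t=1..s. l t) = c + 2 - int s))"
proof -
  have p4: "(2::int) ^ k \<ge> 4"
  proof -
    have "(2::int) ^ 2 \<le> 2 ^ k" using assms(1) by (rule power_increasing) simp
    then show ?thesis by simp
  qed
  have n4: "n > 4" using p4 assms(2) by simp
  have kn: "int (2 ^ k) < n" using assms(2) by simp
  have mc: "maximal_covered k n C \<longleftrightarrow> good (n-1) C \<and> card (K0 (n-1) C) = 2 ^ k - 1"
    using max_char[OF kn assms(3)] .
  have cardeq: "card (K0 (n-1) C) = 2 ^ k - 1 \<longleftrightarrow> int (card (K0 (n-1) C)) = 2 ^ k - 1"
  proof -
    have "(1::nat) \<le> 2 ^ k" by simp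
    then have "int (2 ^ k - 1 :: nat) = 2 ^ k - 1" by (simp add: of_nat_diff)
    then show ?thesis by linarith
  qed
  show ?thesis
  proof (cases "C = {0..n-1}")
    case True
    have K0V: "K0 (n-1) C = {0..n-2}" unfolding K0_def True by auto
    have "int (card (K0 (n-1) C)) = n - 1" unfolding K0V using n4 by simp
    then have lhs: "\<not> maximal_covered k n C" using mc cardeq assms(2) by simp
    have cycV: "cyc n 0 n = {0..n-1}" using cyc_full[of n n 0] cyc_sub[of n 0 n] n4 by auto
    have "is_rep n C 1 (\<lambda>_. 0) (\<lambda>_. n)" unfolding is_rep_def using True cycV n4 by simp
    then have "s \<le> 1" using assms(5) unfolding min_rep_def by blast
    then have s1: "s = 1" using assms(4) by simp
    have Ceq: "C = cyc n (u 1) (l 1)" using assms(5) s1 unfolding min_rep_def is_rep_def by simp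
    have "card C \<le> card {u 1..u 1 + l 1 - 1}" unfolding Ceq cyc_alt by (rule card_image_le) simp
    then have c1: "card C \<le> nat (l 1)" by simp
    have c2: "int (card C) = n" unfolding True using n4 by simp
    have "l 1 \<ge> n"
    proof (rule ccontr)
      assume "\<not> l 1 \<ge> n"
      then have "nat (l 1) < nat n" using n4 by auto
      moreover have "card C = nat n" using c2 by simp
      ultimately show False using c1 by linarith
    qed
    then have "\<not> (u 1 - (u s + l s - n) \<ge> 2)" using s1 by simp
    then show ?thesis using lhs by simp
  next
    case False
    interpret mr n C s u l
      using False assms n4 by unfold_locales auto
    have gi: "good (n-1) C \<longleftrightarrow> (u 1 \<noteq> 1 \<and> u s + l s - 1 \<noteq> n - 2) \<and>
     ((\<forall>t\<in>{1..<s}. u (t + 1) - (u t + l t) \<ge> 2) \<and> u 1 - (u s + l s - n) \<ge> 2)"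
    proof -
      have "(\<forall>t\<in>{1..s}. nxt t - e t \<ge> 2) \<longleftrightarrow>
        ((\<forall>t\<in>{1..<s}. u (t + 1) - (u t + l t) \<ge> 2) \<and> u 1 - (u s + l s - n) \<ge> 2)"
      proof
        assume a: "\<forall>t\<in>{1..s}. nxt t - e t \<ge> 2"
        have "\<forall>t\<in>{1..<s}. u (t + 1) - (u t + l t) \<ge> 2"
        proof
          fix t assume "t \<in> {1..<s}"
          then show "u (t + 1) - (u t + l t) \<ge> 2" using a unfolding nxt_def e_def by force
        qed
        moreover have "u 1 - (u s + l s - n) \<ge> 2" using a s1 unfolding nxt_def e_def by force
        ultimately show "(\<forall>t\<in>{1..<s}. u (t + 1) - (u t + l t) \<ge> 2) \<and> u 1 - (u s + l s - n) \<ge> 2" by simp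
      next
        assume a: "(\<forall>t\<in>{1..<s}. u (t + 1) - (u t + l t) \<ge> 2) \<and> u 1 - (u s + l s - n) \<ge> 2"
        show "\<forall>t\<in>{1..s}. nxt t - e t \<ge> 2"
        proof
          fix t assume t: "t \<in> {1..s}"
          show "nxt t - e t \<ge> 2"
          proof (cases "t < s")
            case True then show ?thesis using a t unfolding nxt_def e_def by auto
          next
            case False then have "t = s" using t by simp
            then show ?thesis using a unfolding nxt_def e_def by auto
          qed
        qed
      qed
      then show ?thesis unfolding good_iff e_def by auto
    qed
    have ci: "card (K0 (n-1) C) = 2 ^ k - 1 \<longleftrightarrow>
      (let c = 2 ^ k - 2 in
        (if {0, n - 1} \<inter> C = {} then (\<Sum>t=1..s. l t) = c + 1 - int s
         else (\<Sum>t=1..s. l t) = c + 2 - int s))"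
      unfolding cardeq card_K0 Let_def by auto
    show ?thesis using mc gi ci by simp
  qed
qed

end
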